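(* Consider the noiseless setting and assume in addition that $\mathbf X$ is i.i.d. Given reads $x_1^\ell(1),x_1^\ell(2)$, let $t_+$ be the largest $t\in[\ell]$ with $x_{\ell-t+1}^\ell(1)=x_1^t(2)$ ($t_+:=0$ if none), and $t_-$ the largest $t\in[\ell-1]$ with $x_{\ell-t+1}^\ell(2)=x_1^t(1)$ ($t_-:=0$ if none). Let $\Gamma_+(t):=1/P_{X_1^t}(x_1^t(2))$, $\Gamma_-(t):=1/P_{X_1^t}(x_1^t(1))$ for $t\ge1$, and $\Gamma_\pm(0):=1$. Then the rule \[ \hat T_{\mathrm{MAP}}(x_1^\ell(1),x_1^\ell(2))=\begin{cases}t_+,&\Gamma_+(t_+)\ge\max\{\Gamma_-(t_-),n_\ell\},\\ -t_-,&\Gamma_-(t_-)\ge\max\{\Gamma_+(t_+),n_\ell\},\\ 0,&\text{otherwise}\end{cases} \] is a maximum a posteriori (hence Bayes-optimal) detector of $T$.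
   Context: Setting. $\mathcal X$ finite alphabet; $\mathbf X=\{X_i\}_{i\in\mathbb Z}$ a random process on $\mathcal X$ (here i.i.d.). Fix $\beta>0$; $\ell=\beta\log n$ (integer), $n_\ell:=n-(2\ell-1)$. $I(1)\sim\mathrm{Uniform}[n]$; conditionally on $I(1)$, $I(2)$ is uniform on $I(1)+\{-\ell+1,\dots,n-\ell\}$ if $1\le I(1)\le\ell-1$, uniform on $[n]$ if $\ell\le I(1)\le n-\ell+1$, uniform on $I(1)+\{\ell-n,\dots,\ell-1\}$ if $n-\ell+2\le I(1)\le n$; independent of $\mathbf X$. Reads $X_1^\ell(j):=X_{I(j)}^{I(j)+\ell-1}$. Signed overlap $T:=\max\{0,\ell-(I(2)-I(1))\}$ if $I(2)\ge I(1)$, else $T:=-\max\{0,\ell-(I(1)-I(2))\}$; values in $\{-(\ell-1),\dots,\ell\}$ with $\mathbb P[T=0]=n_\ell/n$ and $\mathbb P[T=t]=1/n$ for $t\ne0$. Noiseless setting: reads are observed exactly. A MAP detector maps the observed reads to a maximizer over $t$ of $\mathbb P[T=t]\cdot\mathbb P[X_1^\ell(1)=x_1^\ell(1),X_1^\ell(2)=x_1^\ell(2)\mid T=t]$. *)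

theory Defs
  imports "HOL-Probability.Probability"
begin

definition read :: "(int \<Rightarrow> 'a) \<Rightarrow> int \<Rightarrow> nat \<Rightarrow> 'a list" where
  "read X i l = map (\<lambda>k. X (i + int k)) [0..<l]"

(* Finitely many i.i.d. coordinates X_j ~ p, j in A (restriction of the i.i.d. process to A) *)
definition iid_window :: "'a pmf \<Rightarrow> int set \<Rightarrow> (int \<Rightarrow> 'a) pmf" where
  "iid_window p A = Pi_pmf A undefined (\<lambda>_. p)"

definition block_prob :: "'a pmf \<Rightarrow> 'a list \<Rightarrow> real" where
  "block_prob p w =
     measure_pmf.prob (map_pmf (\<lambda>X. read X 1 (length w)) (iid_window p {1..int (length w)})) {w}"

(* Support of I(2) given I(1) = i1 *)
definition I2_set :: "nat \<Rightarrow> nat \<Rightarrow> int \<Rightarrow> int set" where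
  "I2_set n l i1 =
     (if 1 \<le> i1 \<and> i1 \<le> int l - 1 then (\<lambda>j. i1 + j) ` {- int l + 1 .. int n - int l}
      else if int l \<le> i1 \<and> i1 \<le> int n - int l + 1 then {1 .. int n}
      else (\<lambda>j. i1 + j) ` {int l - int n .. int l - 1})"

definition signed_overlap :: "nat \<Rightarrow> int \<Rightarrow> int \<Rightarrow> int" where
  "signed_overlap l i1 i2 =
     (if i2 \<ge> i1 then max 0 (int l - (i2 - i1)) else - max 0 (int l - (i1 - i2)))"

(* Window of indices containing every position touched by either read *)
definition index_window :: "nat \<Rightarrow> nat \<Rightarrow> int set" where
  "index_window n l = {- int l .. int n + 2 * int l}"

definition joint :: "'a pmf \<Rightarrow> nat \<Rightarrow> nat \<Rightarrow> (int \<times> 'a list \<times> 'a list) pmf" where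
  "joint p n l =
     do { i1 \<leftarrow> pmf_of_set {1 .. int n};
          i2 \<leftarrow> pmf_of_set (I2_set n l i1);
          X \<leftarrow> iid_window p (index_window n l);
          return_pmf (signed_overlap l i1 i2, read X i1 l, read X i2 l) }"

definition MAP_objective :: "'a pmf \<Rightarrow> nat \<Rightarrow> nat \<Rightarrow> int \<Rightarrow> 'a list \<Rightarrow> 'a list \<Rightarrow> real" where
  "MAP_objective p n l t x1 x2 =
     (let PT = measure_pmf.prob (joint p n l) {z. fst z = t}
      in PT * (measure_pmf.prob (joint p n l) {(t, x1, x2)} / PT))"

definition is_MAP_detector ::
  "'a pmf \<Rightarrow> nat \<Rightarrow> nat \<Rightarrow> ('a list \<Rightarrow> 'a list \<Rightarrow> int) \<Rightarrow> bool" where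
  "is_MAP_detector p n l d \<longleftrightarrow>
     (\<forall>x1 x2. length x1 = l \<and> length x2 = l \<longrightarrow>
        d x1 x2 \<in> {- (int l - 1) .. int l} \<and>
        (\<forall>t \<in> {- (int l - 1) .. int l}.
            MAP_objective p n l t x1 x2 \<le> MAP_objective p n l (d x1 x2) x1 x2))"

definition t_plus :: "nat \<Rightarrow> 'a list \<Rightarrow> 'a list \<Rightarrow> nat" where
  "t_plus l x1 x2 = Max ({t \<in> {1..l}. drop (l - t) x1 = take t x2} \<union> {0})"

definition t_minus :: "nat \<Rightarrow> 'a list \<Rightarrow> 'a list \<Rightarrow> nat" where
  "t_minus l x1 x2 = Max ({t \<in> {1..l-1}. drop (l - t) x2 = take t x1} \<union> {0})"

definition Gamma_plus :: "'a pmf \<Rightarrow> 'a list \<Rightarrow> nat \<Rightarrow> real" where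
  "Gamma_plus p x2 t = (if t = 0 then 1 else 1 / block_prob p (take t x2))"

definition Gamma_minus :: "'a pmf \<Rightarrow> 'a list \<Rightarrow> nat \<Rightarrow> real" where
  "Gamma_minus p x1 t = (if t = 0 then 1 else 1 / block_prob p (take t x1))"

definition T_MAP_rule :: "'a pmf \<Rightarrow> nat \<Rightarrow> nat \<Rightarrow> 'a list \<Rightarrow> 'a list \<Rightarrow> int" where
  "T_MAP_rule p n l x1 x2 =
     (let tp = t_plus l x1 x2; tm = t_minus l x1 x2;
          gp = Gamma_plus p x2 tp; gm = Gamma_minus p x1 tm;
          nl = real n - (2 * real l - 1)
      in if gp \<ge> max gm nl then int tp
         else if gm \<ge> max gp nl then - int tm
         else 0)"

end

theory Submission
  imports Defs
begin


lemma Pi_prob_fix: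
  assumes "finite A" "S \<subseteq> A"
  shows "measure_pmf.prob (Pi_pmf A d (\<lambda>_. p)) {X. \<forall>j\<in>S. X j = f j} = (\<Prod>j\<in>S. pmf p (f j))"
proof -
  have e: "{X. \<forall>j\<in>S. X j = f j} = Pi A (\<lambda>j. if j \<in> S then {f j} else UNIV)"
    using assms(2) by (auto simp: Pi_def)
  have "measure_pmf.prob (Pi_pmf A d (\<lambda>_. p)) {X. \<forall>j\<in>S. X j = f j}
     = (\<Prod>j\<in>A. measure_pmf.prob p (if j \<in> S then {f j} else UNIV))"
    unfolding e by (rule measure_Pi_pmf_Pi[OF assms(1)])
  also have "\<dots> = (\<Prod>j\<in>A. if j \<in> S then pmf p (f j) else 1)"
    by (intro prod.cong) (auto simp: measure_pmf_single)
  also have "\<dots> = (\<Prod>j\<in>A \<inter> S. pmf p (f j))"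
    using prod.inter_restrict[OF assms(1)] by metis
  also have "A \<inter> S = S" using assms(2) by auto
  finally show ?thesis .
qed

lemma prod_int_reindex:
  "(\<Prod>j\<in>{i + int a..<i + int b}. f (nat (j - i))) = (\<Prod>k\<in>{a..<b}. f k)"
  by (rule prod.reindex_bij_witness[of _ "\<lambda>k. i + int k" "\<lambda>j. nat (j - i)"]) auto

lemma read_eq_iff:
  assumes "length x = l"
  shows "read X i l = x \<longleftrightarrow> (\<forall>j\<in>{i..<i + int l}. X j = x ! nat (j - i))"
proof
  assume "read X i l = x"
  then have h: "\<And>k. k < l \<Longrightarrow> X (i + int k) = x ! k"
    unfolding read_def by (auto simp: nth_equalityI)
  show "\<forall>j\<in>{i..<i + int l}. X j = x ! nat (j - i)"
  proof
    fix j assume "j \<in> {i..<i + int l}"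
    then have "nat (j - i) < l" "i + int (nat (j - i)) = j" by auto
    then show "X j = x ! nat (j - i)" using h by metis
  qed
next
  assume h: "\<forall>j\<in>{i..<i + int l}. X j = x ! nat (j - i)"
  show "read X i l = x" unfolding read_def
  proof (rule nth_equalityI)
    fix k assume "k < length (map (\<lambda>k. X (i + int k)) [0..<l])"
    then have "k < l" by simp
    then show "map (\<lambda>k. X (i + int k)) [0..<l] ! k = x ! k"
      using h[rule_format, of "i + int k"] by simp
  qed (simp add: assms)
qed

lemma block_prob_eq:
  "block_prob p w = (\<Prod>k<length w. pmf p (w ! k))"
proof -
  let ?m = "length w"
  have "block_prob p w = measure_pmf.prob (iid_window p {1..int ?m}) {X. read X 1 ?m = w}"
    unfolding block_prob_def measure_map_pmf by (simp add: vimage_def)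
  also have "{X. read X 1 ?m = w} = {X. \<forall>j\<in>{1..<1 + int ?m}. X j = w ! nat (j - 1)}"
    using read_eq_iff[of w ?m] by auto
  also have "measure_pmf.prob (iid_window p {1..int ?m}) \<dots> = (\<Prod>j\<in>{1..<1 + int ?m}. pmf p (w ! nat (j - 1)))"
    unfolding iid_window_def by (rule Pi_prob_fix) auto
  also have "\<dots> = (\<Prod>k\<in>{0..<?m}. pmf p (w ! k))"
    using prod_int_reindex[of "\<lambda>k. pmf p (w ! k)" 1 0 ?m] by simp
  finally show ?thesis by (simp add: lessThan_atLeast0)
qed



lemma two_reads:
  fixes W :: "int set"
  assumes W: "finite W" "{i1..<i1 + int l} \<subseteq> W" "{i2..<i2 + int l} \<subseteq> W"
    and len: "length x1 = l" "length x2 = l"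
  shows "measure_pmf.prob (Pi_pmf W d (\<lambda>_. p)) {X. read X i1 l = x1 \<and> read X i2 l = x2} =
    (if (\<forall>j\<in>{i1..<i1 + int l} \<inter> {i2..<i2 + int l}. x1 ! nat (j - i1) = x2 ! nat (j - i2))
     then (\<Prod>k<l. pmf p (x1 ! k)) * (\<Prod>j\<in>{i2..<i2 + int l} - {i1..<i1 + int l}. pmf p (x2 ! nat (j - i2)))
     else 0)"
proof -
  define S1 where "S1 = {i1..<i1 + int l}"
  define S2 where "S2 = {i2..<i2 + int l}"
  have ev: "{X. read X i1 l = x1 \<and> read X i2 l = x2} =
     {X. (\<forall>j\<in>S1. X j = x1 ! nat (j - i1)) \<and> (\<forall>j\<in>S2. X j = x2 ! nat (j - i2))}"
    unfolding S1_def S2_def by (simp add: read_eq_iff[OF len(1)] read_eq_iff[OF len(2)])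
  show ?thesis
  proof (cases "\<forall>j\<in>S1 \<inter> S2. x1 ! nat (j - i1) = x2 ! nat (j - i2)")
    case True
    define h where "h j = (if j \<in> S1 then x1 ! nat (j - i1) else x2 ! nat (j - i2))" for j
    have "{X. read X i1 l = x1 \<and> read X i2 l = x2} = {X. \<forall>j\<in>S1 \<union> S2. X j = h j}"
    proof -
      have "\<And>X. ((\<forall>j\<in>S1. X j = x1 ! nat (j - i1)) \<and> (\<forall>j\<in>S2. X j = x2 ! nat (j - i2)))
              = (\<forall>j\<in>S1 \<union> S2. X j = h j)"
        using True unfolding h_def by (metis (no_types, lifting) IntI Un_iff)
      then show ?thesis unfolding ev by blast
    qed
    then have "measure_pmf.prob (Pi_pmf W d (\<lambda>_. p)) {X. read X i1 l = x1 \<and> read X i2 l = x2}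
      = (\<Prod>j\<in>S1 \<union> S2. pmf p (h j))"
      using Pi_prob_fix[OF W(1), of "S1 \<union> S2"] W unfolding S1_def S2_def by auto
    also have "S1 \<union> S2 = S1 \<union> (S2 - S1)" by auto
    also have "(\<Prod>j\<in>S1 \<union> (S2 - S1). pmf p (h j)) = (\<Prod>j\<in>S1. pmf p (h j)) * (\<Prod>j\<in>S2 - S1. pmf p (h j))"
      by (rule prod.union_disjoint) (auto simp: S1_def S2_def)
    also have "(\<Prod>j\<in>S1. pmf p (h j)) = (\<Prod>j\<in>S1. pmf p (x1 ! nat (j - i1)))"
      by (rule prod.cong) (auto simp: h_def)
    also have "\<dots> = (\<Prod>k\<in>{0..<l}. pmf p (x1 ! k))"
      using prod_int_reindex[of "\<lambda>k. pmf p (x1 ! k)" i1 0 l] by (simp add: S1_def)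
    also have "(\<Prod>j\<in>S2 - S1. pmf p (h j)) = (\<Prod>j\<in>S2 - S1. pmf p (x2 ! nat (j - i2)))"
      by (rule prod.cong) (auto simp: h_def)
    finally show ?thesis using True by (simp add: S1_def S2_def lessThan_atLeast0)
  next
    case False
    then obtain j where j: "j \<in> S1" "j \<in> S2" "x1 ! nat (j - i1) \<noteq> x2 ! nat (j - i2)" by auto
    have emp: "{X. read X i1 l = x1 \<and> read X i2 l = x2} = {}"
      unfolding ev using j by force
    have nc: "\<not> (\<forall>j\<in>{i1..<i1 + int l} \<inter> {i2..<i2 + int l}. x1 ! nat (j - i1) = x2 ! nat (j - i2))"
      using False by (simp add: S1_def S2_def)
    show ?thesis unfolding if_not_P[OF nc] emp by simp
  qed
qed



lemma drop_take_iff: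
  assumes "length xs = l" "length ys = l" "t \<le> l"
  shows "drop (l - t) xs = take t ys \<longleftrightarrow> (\<forall>k<t. xs ! (l - t + k) = ys ! k)"
  using assms by (auto simp: list_eq_iff_nth_eq)

lemma cond_plus:
  assumes "i2 = i1 + int (l - t)" "t \<le> l"
  shows "(\<forall>j\<in>{i1..<i1 + int l} \<inter> {i2..<i2 + int l}. x1 ! nat (j - i1) = x2 ! nat (j - i2))
     \<longleftrightarrow> (\<forall>k<t. x1 ! (l - t + k) = x2 ! k)"
proof
  assume h: "\<forall>j\<in>{i1..<i1 + int l} \<inter> {i2..<i2 + int l}. x1 ! nat (j - i1) = x2 ! nat (j - i2)"
  show "\<forall>k<t. x1 ! (l - t + k) = x2 ! k"
  proof (intro allI impI)
    fix k assume k: "k < t"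
    have m: "i2 + int k \<in> {i1..<i1 + int l} \<inter> {i2..<i2 + int l}" using assms k by auto
    have e: "nat (i2 + int k - i1) = l - t + k" using assms k by auto
    show "x1 ! (l - t + k) = x2 ! k" using h[rule_format, OF m] e by simp
  qed
next
  assume h: "\<forall>k<t. x1 ! (l - t + k) = x2 ! k"
  show "\<forall>j\<in>{i1..<i1 + int l} \<inter> {i2..<i2 + int l}. x1 ! nat (j - i1) = x2 ! nat (j - i2)"
  proof
    fix j assume j: "j \<in> {i1..<i1 + int l} \<inter> {i2..<i2 + int l}"
    define k where "k = nat (j - i2)"
    have "k < t" "nat (j - i1) = l - t + k" using assms j by (auto simp: k_def)
    then show "x1 ! nat (j - i1) = x2 ! nat (j - i2)" using h by (simp add: k_def)
  qed
qed

lemma cond_minus: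
  assumes "i2 = i1 - int (l - s)" "s \<le> l"
  shows "(\<forall>j\<in>{i1..<i1 + int l} \<inter> {i2..<i2 + int l}. x1 ! nat (j - i1) = x2 ! nat (j - i2))
     \<longleftrightarrow> (\<forall>k<s. x2 ! (l - s + k) = x1 ! k)"
proof
  assume h: "\<forall>j\<in>{i1..<i1 + int l} \<inter> {i2..<i2 + int l}. x1 ! nat (j - i1) = x2 ! nat (j - i2)"
  show "\<forall>k<s. x2 ! (l - s + k) = x1 ! k"
  proof (intro allI impI)
    fix k assume k: "k < s"
    have m: "i1 + int k \<in> {i1..<i1 + int l} \<inter> {i2..<i2 + int l}" using assms k by auto
    have e: "nat (i1 + int k - i2) = l - s + k" using assms k by auto
    show "x2 ! (l - s + k) = x1 ! k" using h[rule_format, OF m] e by simp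
  qed
next
  assume h: "\<forall>k<s. x2 ! (l - s + k) = x1 ! k"
  show "\<forall>j\<in>{i1..<i1 + int l} \<inter> {i2..<i2 + int l}. x1 ! nat (j - i1) = x2 ! nat (j - i2)"
  proof
    fix j assume j: "j \<in> {i1..<i1 + int l} \<inter> {i2..<i2 + int l}"
    define k where "k = nat (j - i1)"
    have "k < s" "nat (j - i2) = l - s + k" using assms j by (auto simp: k_def)
    then show "x1 ! nat (j - i1) = x2 ! nat (j - i2)" using h by (simp add: k_def)
  qed
qed

lemma diff_plus:
  assumes "i2 = i1 + int (l - t)" "t \<le> l"
  shows "(\<Prod>j\<in>{i2..<i2 + int l} - {i1..<i1 + int l}. f (nat (j - i2))) = (\<Prod>k\<in>{t..<l}. f k)"
proof -
  have "{i2..<i2 + int l} - {i1..<i1 + int l} = {i2 + int t..<i2 + int l}" using assms by auto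
  then show ?thesis using prod_int_reindex[of f i2 t l] by simp
qed

lemma diff_minus:
  assumes "i2 = i1 - int (l - s)" "s \<le> l"
  shows "(\<Prod>j\<in>{i2..<i2 + int l} - {i1..<i1 + int l}. f (nat (j - i2))) = (\<Prod>k\<in>{0..<l - s}. f k)"
proof -
  have "{i2..<i2 + int l} - {i1..<i1 + int l} = {i2 + int 0..<i2 + int (l - s)}" using assms by auto
  then show ?thesis using prod_int_reindex[of f i2 0 "l - s"] by simp
qed

lemma far_sets:
  assumes "int l \<le> \<bar>i2 - i1\<bar>"
  shows "{i1..<i1 + int l} \<inter> {i2..<i2 + int l} = {}"
    "{i2..<i2 + int l} - {i1..<i1 + int l} = {i2..<i2 + int l}"
  using assms by auto



lemma I2_facts:
  assumes l1: "1 \<le> l" and ln: "2 * l - 1 \<le> n" and i1: "i1 \<in> {1..int n}"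
  shows "finite (I2_set n l i1)" "card (I2_set n l i1) = n"
    "I2_set n l i1 \<subseteq> {2 - int l .. int n + int l - 1}"
    "{i1 - (int l - 1) .. i1 + (int l - 1)} \<subseteq> I2_set n l i1"
proof -
  have ln': "2 * int l - 1 \<le> int n" using ln l1 by linarith
  have inj: "inj_on (\<lambda>j. i1 + j) A" for A :: "int set" by (auto simp: inj_on_def)
  show "finite (I2_set n l i1)" unfolding I2_set_def by auto
  show "card (I2_set n l i1) = n" unfolding I2_set_def using l1
    by (auto simp: card_image[OF inj])
  show "I2_set n l i1 \<subseteq> {2 - int l .. int n + int l - 1}"
    using i1 ln' unfolding I2_set_def using l1 by auto
  show "{i1 - (int l - 1) .. i1 + (int l - 1)} \<subseteq> I2_set n l i1"
  proof
    fix x assume x: "x \<in> {i1 - (int l - 1) .. i1 + (int l - 1)}"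
    have "x = i1 + (x - i1)" by simp
    then show "x \<in> I2_set n l i1"
      using x i1 ln' unfolding I2_set_def
      by (auto intro!: image_eqI[where x = "x - i1"])
  qed
qed

lemma so_plus:
  assumes "1 \<le> t" "t \<le> l"
  shows "signed_overlap l i1 i2 = int t \<longleftrightarrow> i2 = i1 + int (l - t)"
  using assms unfolding signed_overlap_def by auto

lemma so_minus:
  assumes "1 \<le> s" "s < l"
  shows "signed_overlap l i1 i2 = - int s \<longleftrightarrow> i2 = i1 - int (l - s)"
  using assms unfolding signed_overlap_def by auto

lemma so_zero:
  "signed_overlap l i1 i2 = 0 \<longleftrightarrow> int l \<le> \<bar>i2 - i1\<bar>"
  unfolding signed_overlap_def by auto

definition Fr :: "'a pmf \<Rightarrow> nat \<Rightarrow> nat \<Rightarrow> 'a list \<Rightarrow> 'a list \<Rightarrow> int \<Rightarrow> int \<Rightarrow> real" where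
  "Fr p n l x1 x2 i1 i2 = measure_pmf.prob (iid_window p (index_window n l))
      {X. read X i1 l = x1 \<and> read X i2 l = x2}"

lemma pmf_joint:
  assumes l1: "1 \<le> l" and ln: "2 * l - 1 \<le> n"
  shows "pmf (joint p n l) (t, x1, x2) =
    (\<Sum>i1\<in>{1..int n}. (\<Sum>i2\<in>I2_set n l i1.
        (if signed_overlap l i1 i2 = t then Fr p n l x1 x2 i1 i2 else 0)) / real n) / real n"
proof -
  have n0: "n \<noteq> 0" using l1 ln by auto
  have inner: "pmf (map_pmf
        (\<lambda>X. (signed_overlap l i1 i2, read X i1 l, read X i2 l)) (iid_window p (index_window n l))) (t, x1, x2)
      = (if signed_overlap l i1 i2 = t then Fr p n l x1 x2 i1 i2 else 0)" for i1 i2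
  proof -
    have "pmf (map_pmf
        (\<lambda>X. (signed_overlap l i1 i2, read X i1 l, read X i2 l)) (iid_window p (index_window n l))) (t, x1, x2)
      = measure_pmf.prob (iid_window p (index_window n l))
         ((\<lambda>X. (signed_overlap l i1 i2, read X i1 l, read X i2 l)) -` {(t, x1, x2)})"
      by (rule pmf_map)
    also have "(\<lambda>X. (signed_overlap l i1 i2, read X i1 l, read X i2 l)) -` {(t, x1, x2)}
      = (if signed_overlap l i1 i2 = t then {X. read X i1 l = x1 \<and> read X i2 l = x2} else {})"
      by auto
    finally show ?thesis by (simp add: Fr_def)
  qed
  have ne: "I2_set n l i1 \<noteq> {}" "finite (I2_set n l i1)" if "i1 \<in> {1..int n}" for i1
    using I2_facts[OF l1 ln that] n0 by auto
  have card: "card (I2_set n l i1) = n" if "i1 \<in> {1..int n}" for i1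
    using I2_facts[OF l1 ln that] by auto
  have "pmf (joint p n l) (t, x1, x2) =
      (\<Sum>i1\<in>{1..int n}. (\<Sum>i2\<in>I2_set n l i1.
        (if signed_overlap l i1 i2 = t then Fr p n l x1 x2 i1 i2 else 0)) / real (card (I2_set n l i1))) / real (card {1..int n})"
    unfolding joint_def map_pmf_def[symmetric]
    apply (simp only: pmf_bind inner)
    using n0 ne by (simp add: integral_pmf_of_set)
  also have "\<dots> = (\<Sum>i1\<in>{1..int n}. (\<Sum>i2\<in>I2_set n l i1.
        (if signed_overlap l i1 i2 = t then Fr p n l x1 x2 i1 i2 else 0)) / real n) / real n"
    using card by (intro arg_cong2[where f="(/)"] sum.cong) auto
  finally show ?thesis .
qed



lemma Fr_eq:
  assumes "i1 \<in> {1..int n}" "i2 \<in> {2 - int l .. int n + int l - 1}"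
    and len: "length x1 = l" "length x2 = l"
  shows "Fr p n l x1 x2 i1 i2 =
    (if (\<forall>j\<in>{i1..<i1 + int l} \<inter> {i2..<i2 + int l}. x1 ! nat (j - i1) = x2 ! nat (j - i2))
     then (\<Prod>k<l. pmf p (x1 ! k)) * (\<Prod>j\<in>{i2..<i2 + int l} - {i1..<i1 + int l}. pmf p (x2 ! nat (j - i2)))
     else 0)"
  unfolding Fr_def iid_window_def
  by (rule two_reads) (use assms in \<open>auto simp: index_window_def\<close>)

lemma pmf_plus:
  assumes l1: "1 \<le> l" and ln: "2 * l - 1 \<le> n" and len: "length x1 = l" "length x2 = l"
    and t: "1 \<le> t" "t \<le> l"
  shows "pmf (joint p n l) (int t, x1, x2) =
    (if drop (l - t) x1 = take t x2 then (\<Prod>k<l. pmf p (x1 ! k)) * (\<Prod>k\<in>{t..<l}. pmf p (x2 ! k)) else 0) / real n"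
proof -
  define V where "V = (if drop (l - t) x1 = take t x2 then (\<Prod>k<l. pmf p (x1 ! k)) * (\<Prod>k\<in>{t..<l}. pmf p (x2 ! k)) else 0)"
  have n0: "n \<noteq> 0" using l1 ln by auto
  have inner: "(\<Sum>i2\<in>I2_set n l i1. (if signed_overlap l i1 i2 = int t then Fr p n l x1 x2 i1 i2 else 0)) = V"
    if i1: "i1 \<in> {1..int n}" for i1
  proof -
    note I = I2_facts[OF l1 ln i1]
    define c where "c = i1 + int (l - t)"
    have cI: "c \<in> I2_set n l i1" using I(4) t unfolding c_def by auto
    have "(\<Sum>i2\<in>I2_set n l i1. (if signed_overlap l i1 i2 = int t then Fr p n l x1 x2 i1 i2 else 0))
        = (\<Sum>i2\<in>I2_set n l i1. (if i2 = c then Fr p n l x1 x2 i1 i2 else 0))"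
      using so_plus[OF t] unfolding c_def by simp
    also have "\<dots> = Fr p n l x1 x2 i1 c" using I(1) cI by simp
    also have "\<dots> = V"
    proof -
      have cr: "c \<in> {2 - int l .. int n + int l - 1}" using I(3) cI by auto
      show ?thesis
        unfolding Fr_eq[OF i1 cr len] cond_plus[OF c_def t(2)]
          drop_take_iff[OF len t(2), symmetric] V_def
        by (simp add: diff_plus[OF c_def t(2), of "\<lambda>k. pmf p (x2 ! k)"])
    qed
    finally show ?thesis .
  qed
  show ?thesis
    unfolding pmf_joint[OF l1 ln] V_def[symmetric]
    using inner n0 by simp
qed

lemma pmf_minus:
  assumes l1: "1 \<le> l" and ln: "2 * l - 1 \<le> n" and len: "length x1 = l" "length x2 = l"
    and s: "1 \<le> s" "s < l"
  shows "pmf (joint p n l) (- int s, x1, x2) =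
    (if drop (l - s) x2 = take s x1 then (\<Prod>k<l. pmf p (x1 ! k)) * (\<Prod>k\<in>{0..<l - s}. pmf p (x2 ! k)) else 0) / real n"
proof -
  define V where "V = (if drop (l - s) x2 = take s x1 then (\<Prod>k<l. pmf p (x1 ! k)) * (\<Prod>k\<in>{0..<l - s}. pmf p (x2 ! k)) else 0)"
  have n0: "n \<noteq> 0" using l1 ln by auto
  have s': "s \<le> l" using s by auto
  have inner: "(\<Sum>i2\<in>I2_set n l i1. (if signed_overlap l i1 i2 = - int s then Fr p n l x1 x2 i1 i2 else 0)) = V"
    if i1: "i1 \<in> {1..int n}" for i1
  proof -
    note I = I2_facts[OF l1 ln i1]
    define c where "c = i1 - int (l - s)"
    have cI: "c \<in> I2_set n l i1" using I(4) s unfolding c_def by auto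
    have "(\<Sum>i2\<in>I2_set n l i1. (if signed_overlap l i1 i2 = - int s then Fr p n l x1 x2 i1 i2 else 0))
        = (\<Sum>i2\<in>I2_set n l i1. (if i2 = c then Fr p n l x1 x2 i1 i2 else 0))"
      using so_minus[OF s] unfolding c_def by simp
    also have "\<dots> = Fr p n l x1 x2 i1 c" using I(1) cI by simp
    also have "\<dots> = V"
    proof -
      have cr: "c \<in> {2 - int l .. int n + int l - 1}" using I(3) cI by auto
      show ?thesis
        unfolding Fr_eq[OF i1 cr len] cond_minus[OF c_def s']
          drop_take_iff[OF len(2,1) s', symmetric] V_def
        by (simp add: diff_minus[OF c_def s', of "\<lambda>k. pmf p (x2 ! k)"])
    qed
    finally show ?thesis .
  qed
  show ?thesis
    unfolding pmf_joint[OF l1 ln] V_def[symmetric]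
    using inner n0 by simp
qed

lemma pmf_zero:
  assumes l1: "1 \<le> l" and ln: "2 * l - 1 \<le> n" and len: "length x1 = l" "length x2 = l"
  shows "pmf (joint p n l) (0, x1, x2) =
    (real n - (2 * real l - 1)) * ((\<Prod>k<l. pmf p (x1 ! k)) * (\<Prod>k<l. pmf p (x2 ! k))) / real n"
proof -
  define Q where "Q = (\<Prod>k<l. pmf p (x1 ! k)) * (\<Prod>k<l. pmf p (x2 ! k))"
  have n0: "n \<noteq> 0" using l1 ln by auto
  have inner: "(\<Sum>i2\<in>I2_set n l i1. (if signed_overlap l i1 i2 = 0 then Fr p n l x1 x2 i1 i2 else 0))
      = (real n - (2 * real l - 1)) * Q"
    if i1: "i1 \<in> {1..int n}" for i1
  proof -
    note I = I2_facts[OF l1 ln i1]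
    define B where "B = {i1 - (int l - 1) .. i1 + (int l - 1)}"
    have "(\<Sum>i2\<in>I2_set n l i1. (if signed_overlap l i1 i2 = 0 then Fr p n l x1 x2 i1 i2 else 0))
        = (\<Sum>i2\<in>I2_set n l i1. (if int l \<le> \<bar>i2 - i1\<bar> then Q else 0))"
    proof (intro sum.cong refl)
      fix i2 assume i2: "i2 \<in> I2_set n l i1"
      show "(if signed_overlap l i1 i2 = 0 then Fr p n l x1 x2 i1 i2 else 0) = (if int l \<le> \<bar>i2 - i1\<bar> then Q else 0)"
      proof (cases "int l \<le> \<bar>i2 - i1\<bar>")
        case True
        have "Fr p n l x1 x2 i1 i2 = Q"
          using Fr_eq[OF i1 _ len, of i2 p] I(3) i2 far_sets[OF True]
            prod_int_reindex[of "\<lambda>k. pmf p (x2 ! k)" i2 0 l]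
          unfolding Q_def by (auto simp: lessThan_atLeast0)
        then show ?thesis using True so_zero by simp
      qed (use so_zero in auto)
    qed
    also have "\<dots> = (\<Sum>i2\<in>I2_set n l i1 - B. Q)"
    proof -
      have "{x \<in> I2_set n l i1. int l \<le> \<bar>x - i1\<bar>} = I2_set n l i1 - B" by (auto simp: B_def)
      then show ?thesis using sum.inter_filter[OF I(1), of "\<lambda>_. Q" "\<lambda>x. int l \<le> \<bar>x - i1\<bar>"] by simp
    qed
    also have "\<dots> = real (card (I2_set n l i1 - B)) * Q" by simp
    also have "card (I2_set n l i1 - B) = n - card B"
      using card_Diff_subset[of B "I2_set n l i1"] I(2,4) unfolding B_def by auto
    also have "card B = 2 * l - 1" unfolding B_def using l1 by auto
    also have "real (n - (2 * l - 1)) = real n - (2 * real l - 1)" using ln l1 by auto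
    finally show ?thesis .
  qed
  show ?thesis
    unfolding pmf_joint[OF l1 ln] Q_def[symmetric]
    using inner n0 by simp
qed



lemma alg_div:
  fixes P1 P2 A B C :: real
  assumes "P1 = A * B" "P2 = B * C"
  shows "P1 * C = P1 * P2 * (1 / B)"
  using assms by (cases "B = 0") (auto simp: field_simps)

lemma obj_eq: "MAP_objective p n l t x1 x2 = pmf (joint p n l) (t, x1, x2)"
proof -
  define PT where "PT = measure_pmf.prob (joint p n l) {z. fst z = t}"
  have le: "pmf (joint p n l) (t, x1, x2) \<le> PT"
    unfolding PT_def measure_pmf_single[symmetric]
    by (rule measure_pmf.finite_measure_mono) auto
  show ?thesis
  proof (cases "PT = 0")
    case True
    then show ?thesis using le pmf_nonneg[of "joint p n l" "(t, x1, x2)"]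
      unfolding MAP_objective_def Let_def PT_def[symmetric] by (simp add: measure_pmf_single)
  next
    case False
    then show ?thesis unfolding MAP_objective_def Let_def PT_def[symmetric] by (simp add: measure_pmf_single)
  qed
qed

lemma Gamma_plus_eq:
  assumes "1 \<le> t" "t \<le> length x2"
  shows "Gamma_plus p x2 t = 1 / (\<Prod>k<t. pmf p (x2 ! k))"
  using assms unfolding Gamma_plus_def block_prob_eq by (simp add: min_def)

lemma Gamma_minus_eq:
  assumes "1 \<le> t" "t \<le> length x1"
  shows "Gamma_minus p x1 t = 1 / (\<Prod>k<t. pmf p (x1 ! k))"
  using assms unfolding Gamma_minus_def block_prob_eq by (simp add: min_def)

lemma obj_plus:
  assumes l1: "1 \<le> l" and ln: "2 * l - 1 \<le> n" and len: "length x1 = l" "length x2 = l"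
    and t: "1 \<le> t" "t \<le> l"
  shows "MAP_objective p n l (int t) x1 x2 =
    (if drop (l - t) x1 = take t x2
     then ((\<Prod>k<l. pmf p (x1 ! k)) * (\<Prod>k<l. pmf p (x2 ! k))) * Gamma_plus p x2 t else 0) / real n"
proof (cases "drop (l - t) x1 = take t x2")
  case True
  have m: "\<forall>k<t. x1 ! (l - t + k) = x2 ! k" using True drop_take_iff[OF len t(2)] by simp
  define A where "A = (\<Prod>k\<in>{0..<l - t}. pmf p (x1 ! k))"
  define B where "B = (\<Prod>k<t. pmf p (x2 ! k))"
  define C where "C = (\<Prod>k\<in>{t..<l}. pmf p (x2 ! k))"
  have "(\<Prod>k<l. pmf p (x1 ! k)) = A * (\<Prod>k\<in>{l - t..<l}. pmf p (x1 ! k))"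
    unfolding A_def lessThan_atLeast0 using t by (subst prod.atLeastLessThan_concat[symmetric]) auto
  also have "(\<Prod>k\<in>{l - t..<l}. pmf p (x1 ! k)) = (\<Prod>k\<in>{0..<t}. pmf p (x1 ! (k + (l - t))))"
    using prod.shift_bounds_nat_ivl[of "\<lambda>k. pmf p (x1 ! k)" 0 "l - t" t] t by simp
  also have "\<dots> = B" unfolding B_def lessThan_atLeast0
    by (rule prod.cong) (use m in \<open>auto simp: add.commute\<close>)
  finally have P1: "(\<Prod>k<l. pmf p (x1 ! k)) = A * B" .
  have P2: "(\<Prod>k<l. pmf p (x2 ! k)) = B * C"
    unfolding B_def C_def lessThan_atLeast0 using t by (subst prod.atLeastLessThan_concat) auto
  show ?thesis
    unfolding obj_eq pmf_plus[OF l1 ln len t] Gamma_plus_eq[OF t(1) t(2)[folded len(2)]] B_def[symmetric]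
    using True alg_div[OF P1 P2] by (simp add: C_def)
next
  case False
  then show ?thesis unfolding obj_eq pmf_plus[OF l1 ln len t] by simp
qed

lemma obj_minus:
  assumes l1: "1 \<le> l" and ln: "2 * l - 1 \<le> n" and len: "length x1 = l" "length x2 = l"
    and s: "1 \<le> s" "s < l"
  shows "MAP_objective p n l (- int s) x1 x2 =
    (if drop (l - s) x2 = take s x1
     then ((\<Prod>k<l. pmf p (x1 ! k)) * (\<Prod>k<l. pmf p (x2 ! k))) * Gamma_minus p x1 s else 0) / real n"
proof (cases "drop (l - s) x2 = take s x1")
  case True
  have s': "s \<le> l" using s by auto
  have m: "\<forall>k<s. x2 ! (l - s + k) = x1 ! k" using True drop_take_iff[OF len(2,1) s'] by simp
  define A where "A = (\<Prod>k\<in>{0..<l - s}. pmf p (x2 ! k))"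
  define B where "B = (\<Prod>k<s. pmf p (x1 ! k))"
  define C where "C = (\<Prod>k\<in>{s..<l}. pmf p (x1 ! k))"
  have "(\<Prod>k<l. pmf p (x2 ! k)) = A * (\<Prod>k\<in>{l - s..<l}. pmf p (x2 ! k))"
    unfolding A_def lessThan_atLeast0 using s by (subst prod.atLeastLessThan_concat[symmetric]) auto
  also have "(\<Prod>k\<in>{l - s..<l}. pmf p (x2 ! k)) = (\<Prod>k\<in>{0..<s}. pmf p (x2 ! (k + (l - s))))"
    using prod.shift_bounds_nat_ivl[of "\<lambda>k. pmf p (x2 ! k)" 0 "l - s" s] s by simp
  also have "\<dots> = B" unfolding B_def lessThan_atLeast0
    by (rule prod.cong) (use m in \<open>auto simp: add.commute\<close>)
  finally have P2: "(\<Prod>k<l. pmf p (x2 ! k)) = A * B" .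
  have P1: "(\<Prod>k<l. pmf p (x1 ! k)) = B * C"
    unfolding B_def C_def lessThan_atLeast0 using s by (subst prod.atLeastLessThan_concat) auto
  have "(\<Prod>k<l. pmf p (x1 ! k)) * A = (\<Prod>k<l. pmf p (x1 ! k)) * (\<Prod>k<l. pmf p (x2 ! k)) * (1 / B)"
    by (rule alg_div[where A=C]) (use P1 P2 in \<open>simp_all add: mult.commute\<close>)
  then show ?thesis
    unfolding obj_eq pmf_minus[OF l1 ln len s] Gamma_minus_eq[OF s(1) s'[folded len(1)]] B_def[symmetric]
    using True by (simp add: A_def lessThan_atLeast0)
next
  case False
  then show ?thesis unfolding obj_eq pmf_minus[OF l1 ln len s] by simp
qed

lemma obj_zero:
  assumes l1: "1 \<le> l" and ln: "2 * l - 1 \<le> n" and len: "length x1 = l" "length x2 = l"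
  shows "MAP_objective p n l 0 x1 x2 =
    (real n - (2 * real l - 1)) * ((\<Prod>k<l. pmf p (x1 ! k)) * (\<Prod>k<l. pmf p (x2 ! k))) / real n"
  unfolding obj_eq pmf_zero[OF l1 ln len] ..



lemma tplus_facts:
  fixes l t :: nat and x1 x2 :: "'a list"
  shows "t_plus l x1 x2 \<le> l"
    "t_plus l x1 x2 \<noteq> 0 \<Longrightarrow> 1 \<le> t_plus l x1 x2 \<and> drop (l - t_plus l x1 x2) x1 = take (t_plus l x1 x2) x2"
    "1 \<le> t \<Longrightarrow> t \<le> l \<Longrightarrow> drop (l - t) x1 = take t x2 \<Longrightarrow> t \<le> t_plus l x1 x2"
proof -
  let ?S = "{t \<in> {1..l}. drop (l - t) x1 = take t x2} \<union> {0}"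
  have f: "finite ?S" "?S \<noteq> {}" by auto
  have "t_plus l x1 x2 \<in> ?S" unfolding t_plus_def by (rule Max_in[OF f])
  then show "t_plus l x1 x2 \<le> l"
    "t_plus l x1 x2 \<noteq> 0 \<Longrightarrow> 1 \<le> t_plus l x1 x2 \<and> drop (l - t_plus l x1 x2) x1 = take (t_plus l x1 x2) x2"
    by auto
  show "1 \<le> t \<Longrightarrow> t \<le> l \<Longrightarrow> drop (l - t) x1 = take t x2 \<Longrightarrow> t \<le> t_plus l x1 x2"
    unfolding t_plus_def by (rule Max_ge[OF f(1)]) auto
qed

lemma tminus_facts:
  fixes l t :: nat and x1 x2 :: "'a list"
  shows "t_minus l x1 x2 \<le> l - 1"
    "t_minus l x1 x2 \<noteq> 0 \<Longrightarrow> 1 \<le> t_minus l x1 x2 \<and> drop (l - t_minus l x1 x2) x2 = take (t_minus l x1 x2) x1"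
    "1 \<le> t \<Longrightarrow> t \<le> l - 1 \<Longrightarrow> drop (l - t) x2 = take t x1 \<Longrightarrow> t \<le> t_minus l x1 x2"
proof -
  let ?S = "{t \<in> {1..l-1}. drop (l - t) x2 = take t x1} \<union> {0}"
  have f: "finite ?S" "?S \<noteq> {}" by auto
  have "t_minus l x1 x2 \<in> ?S" unfolding t_minus_def by (rule Max_in[OF f])
  then show "t_minus l x1 x2 \<le> l - 1"
    "t_minus l x1 x2 \<noteq> 0 \<Longrightarrow> 1 \<le> t_minus l x1 x2 \<and> drop (l - t_minus l x1 x2) x2 = take (t_minus l x1 x2) x1"
    by auto
  show "1 \<le> t \<Longrightarrow> t \<le> l - 1 \<Longrightarrow> drop (l - t) x2 = take t x1 \<Longrightarrow> t \<le> t_minus l x1 x2"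
    unfolding t_minus_def by (rule Max_ge[OF f(1)]) auto
qed


lemma bprod_props:
  assumes pos: "\<forall>k<m. 0 < pmf p (w ! k)" and tt: "t \<le> t'" "t' \<le> m"
  shows "0 < (\<Prod>k<t'. pmf p (w ! k))" "(\<Prod>k<t'. pmf p (w ! k)) \<le> (\<Prod>k<t. pmf p (w ! k))"
    "(\<Prod>k<t. pmf p (w ! k)) \<le> 1"
proof -
  show "0 < (\<Prod>k<t'. pmf p (w ! k))" using pos tt by (intro prod_pos) auto
  have "(\<Prod>k<t'. pmf p (w ! k)) = (\<Prod>k<t. pmf p (w ! k)) * (\<Prod>k\<in>{t..<t'}. pmf p (w ! k))"
    unfolding lessThan_atLeast0 using tt by (subst prod.atLeastLessThan_concat) auto
  moreover have "(\<Prod>k\<in>{t..<t'}. pmf p (w ! k)) \<le> 1" by (rule prod_le_1) (auto simp: pmf_le_1)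
  moreover have "0 \<le> (\<Prod>k<t. pmf p (w ! k))" by (rule prod_nonneg) auto
  ultimately show "(\<Prod>k<t'. pmf p (w ! k)) \<le> (\<Prod>k<t. pmf p (w ! k))"
    by (simp add: mult_left_le)
  show "(\<Prod>k<t. pmf p (w ! k)) \<le> 1" by (rule prod_le_1) (auto simp: pmf_le_1)
qed

lemma inv_prod_mono:
  assumes pos: "\<forall>k<m. 0 < pmf p (w ! k)" and tt: "t \<le> t'" "t' \<le> m"
  shows "1 / (\<Prod>k<t. pmf p (w ! k)) \<le> 1 / (\<Prod>k<t'. pmf p (w ! k))"
    "1 \<le> 1 / (\<Prod>k<t. pmf p (w ! k))"
proof -
  note b = bprod_props[OF pos tt]
  show "1 / (\<Prod>k<t. pmf p (w ! k)) \<le> 1 / (\<Prod>k<t'. pmf p (w ! k))"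
    using b by (intro divide_left_mono) auto
  have "0 < (\<Prod>k<t. pmf p (w ! k))" using bprod_props[OF pos order.refl, of t] tt by auto
  then show "1 \<le> 1 / (\<Prod>k<t. pmf p (w ! k))" using b(3) by simp
qed

lemma pmf_one_other:
  assumes "pmf p c = 1" "d \<noteq> c"
  shows "pmf p d = 0"
proof -
  have "measure_pmf.prob p {c, d} = pmf p c + pmf p d"
    using assms(2) by (subst measure_measure_pmf_finite) auto
  moreover have "measure_pmf.prob p {c, d} \<le> 1" by simp
  ultimately show ?thesis using assms(1) pmf_nonneg[of p d] by linarith
qed


lemma degenerate:
  assumes len: "length x1 = l" "length x2 = l"
    and pos1: "\<forall>k<l. 0 < pmf p (x1 ! k)" and pos2: "\<forall>k<l. 0 < pmf p (x2 ! k)"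
    and s: "1 \<le> s" "s \<le> l"
    and g: "1 / (\<Prod>k<s. pmf p (x1 ! k)) \<le> 1"
  shows "x1 = x2"
proof -
  note b = bprod_props[OF pos1 order.refl s(2)]
  have "1 \<le> (\<Prod>k<s. pmf p (x1 ! k))"
    using g divide_le_eq_1_pos[OF b(1)] by simp
  then have B1: "(\<Prod>k<s. pmf p (x1 ! k)) = 1"
    using b(3) by linarith
  have "(\<Prod>k<s. pmf p (x1 ! k)) = pmf p (x1 ! 0) * (\<Prod>k\<in>{1..<s}. pmf p (x1 ! k))"
    unfolding lessThan_atLeast0 One_nat_def using s by (intro prod.atLeast_Suc_lessThan) auto
  moreover have "(\<Prod>k\<in>{1..<s}. pmf p (x1 ! k)) \<le> 1" by (rule prod_le_1) (auto simp: pmf_le_1)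
  ultimately have "1 \<le> pmf p (x1 ! 0)"
  proof -
    assume a: "(\<Prod>k<s. pmf p (x1 ! k)) = pmf p (x1 ! 0) * (\<Prod>k\<in>{1..<s}. pmf p (x1 ! k))"
      "(\<Prod>k\<in>{1..<s}. pmf p (x1 ! k)) \<le> 1"
    have "pmf p (x1 ! 0) * (\<Prod>k\<in>{1..<s}. pmf p (x1 ! k)) \<le> pmf p (x1 ! 0)"
      by (rule mult_left_le[OF a(2) pmf_nonneg])
    then show ?thesis using a(1) B1 by simp
  qed
  then have c1: "pmf p (x1 ! 0) = 1" using pmf_le_1[of p "x1 ! 0"] by linarith
  have e1: "x1 ! k = x1 ! 0" if "k < l" for k
  proof (rule ccontr)
    assume "x1 ! k \<noteq> x1 ! 0"
    then have "pmf p (x1 ! k) = 0" by (rule pmf_one_other[OF c1])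
    with pos1 that show False by auto
  qed
  have e2: "x2 ! k = x1 ! 0" if "k < l" for k
  proof (rule ccontr)
    assume "x2 ! k \<noteq> x1 ! 0"
    then have "pmf p (x2 ! k) = 0" by (rule pmf_one_other[OF c1])
    with pos2 that show False by auto
  qed
  show ?thesis
  proof (rule nth_equalityI)
    show "length x1 = length x2" using len by simp
    fix k assume "k < length x1"
    then have "k < l" using len by simp
    then show "x1 ! k = x2 ! k" using e1[of k] e2[of k] by (simp only:)
  qed
qed


lemma range_cases:
  assumes "t \<in> {- (int l - 1) .. int l}"
  obtains t' where "t = int t'" "1 \<le> t'" "t' \<le> l" | "t = 0" | s where "t = - int s" "1 \<le> s" "s < l"
proof -
  consider "t \<ge> 1" | "t = 0" | "t \<le> -1" by linarith
  then show ?thesis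
  proof cases
    case 1 then show ?thesis using that(1)[of "nat t"] assms by auto
  next
    case 2 then show ?thesis using that(2) by auto
  next
    case 3 then show ?thesis using that(3)[of "nat (- t)"] assms by auto
  qed
qed


lemma scale_le:
  fixes Q a W :: real
  assumes "0 \<le> Q" "0 < n" "a \<le> W"
  shows "Q * a / n \<le> Q * W / n"
  using assms by (intro divide_right_mono mult_left_mono) auto

theorem mainTheorem6:
  fixes p :: "'a::finite pmf" and n l :: nat and \<beta> :: real
  assumes "\<beta> > 0"
    and "real l = \<beta> * ln (real n)"
    and "n \<ge> 2"
    and "2 * l - 1 \<le> n"
  shows "is_MAP_detector p n l (T_MAP_rule p n l)"
proof -
  have "ln (real n) > 0" using assms(3) by simp
  then have "real l > 0" using assms(1,2) by simp
  then have l1: "1 \<le> l" by simp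
  have ln: "2 * l - 1 \<le> n" using assms(4) .
  have n0: "0 < real n" using assms(3) by simp
  show ?thesis unfolding is_MAP_detector_def
  proof (intro allI impI)
    fix x1 x2 :: "'a list" assume "length x1 = l \<and> length x2 = l"
    then have len: "length x1 = l" "length x2 = l" by auto
    define tp where "tp = t_plus l x1 x2"
    define tm where "tm = t_minus l x1 x2"
    define gp where "gp = Gamma_plus p x2 tp"
    define gm where "gm = Gamma_minus p x1 tm"
    define N where "N = real n - (2 * real l - 1)"
    define Q where "Q = (\<Prod>k<l. pmf p (x1 ! k)) * (\<Prod>k<l. pmf p (x2 ! k))"
    define r where "r = T_MAP_rule p n l x1 x2"
    have r_eq: "r = (if gp \<ge> max gm N then int tp else if gm \<ge> max gp N then - int tm else 0)"
      unfolding r_def T_MAP_rule_def Let_def tp_def tm_def gp_def gm_def N_def by simp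
    have TP1: "tp \<le> l" unfolding tp_def by (rule tplus_facts(1))
    have TP2: "tp \<noteq> 0 \<Longrightarrow> 1 \<le> tp \<and> drop (l - tp) x1 = take tp x2" unfolding tp_def by (rule tplus_facts(2))
    have TP3: "\<And>t. 1 \<le> t \<Longrightarrow> t \<le> l \<Longrightarrow> drop (l - t) x1 = take t x2 \<Longrightarrow> t \<le> tp"
      unfolding tp_def by (rule tplus_facts(3))
    have TM1: "tm \<le> l - 1" unfolding tm_def by (rule tminus_facts(1))
    have TM2: "tm \<noteq> 0 \<Longrightarrow> 1 \<le> tm \<and> drop (l - tm) x2 = take tm x1" unfolding tm_def by (rule tminus_facts(2))
    have TM3: "\<And>t. 1 \<le> t \<Longrightarrow> t \<le> l - 1 \<Longrightarrow> drop (l - t) x2 = take t x1 \<Longrightarrow> t \<le> tm"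
      unfolding tm_def by (rule tminus_facts(3))
    note TP = TP1 TP2 TP3
    note TM = TM1 TM2 TM3
    have rr: "r \<in> {- (int l - 1) .. int l}" using TP(1) TM(1) l1 by (auto simp: r_eq)
    define obj where "obj t = MAP_objective p n l t x1 x2" for t
    have "real (2 * l - 1) \<le> real n" using ln by linarith
    then have N0: "0 \<le> N" unfolding N_def using l1 by (simp add: of_nat_diff)
    have Q0: "0 \<le> Q" unfolding Q_def by (intro mult_nonneg_nonneg prod_nonneg) auto
    define W where "W = max N (max (if 1 \<le> tp then gp else 0) (if 1 \<le> tm then gm else 0))"
    have objp: "obj (int t) = (if drop (l - t) x1 = take t x2 then Q * Gamma_plus p x2 t else 0) / real n"
      if "1 \<le> t" "t \<le> l" for t
      unfolding obj_def Q_def by (rule obj_plus[OF l1 ln len that])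
    have objm: "obj (- int s) = (if drop (l - s) x2 = take s x1 then Q * Gamma_minus p x1 s else 0) / real n"
      if "1 \<le> s" "s < l" for s
      unfolding obj_def Q_def by (rule obj_minus[OF l1 ln len that])
    have obj0: "obj 0 = N * Q / real n"
      unfolding obj_def Q_def N_def by (rule obj_zero[OF l1 ln len])
    have key: "(\<forall>t\<in>{- (int l - 1) .. int l}. obj t \<le> Q * W / real n) \<and> Q * W / real n \<le> obj r"
    proof (cases "Q = 0")
      case True
      have "obj t \<le> Q * W / real n" if "t \<in> {- (int l - 1) .. int l}" for t
        using that
      proof (cases rule: range_cases)
        case (1 t') then show ?thesis using objp[of t'] True by simp
      next
        case 2 then show ?thesis using obj0 True by simp
      next
        case (3 s) then show ?thesis using objm[of s] True by simp
      qed
      moreover have "Q * W / real n \<le> obj r" using True unfolding obj_def obj_eq by simp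
      ultimately show ?thesis by blast
    next
      case False
      have P1: "(\<Prod>k<l. pmf p (x1 ! k)) \<noteq> 0" and P2: "(\<Prod>k<l. pmf p (x2 ! k)) \<noteq> 0"
        using False unfolding Q_def by auto
      have pos1: "\<forall>k<l. 0 < pmf p (x1 ! k)"
      proof (intro allI impI)
        fix k assume "k < l"
        then have "pmf p (x1 ! k) \<noteq> 0" using P1 by (auto simp: prod_zero_iff)
        then show "0 < pmf p (x1 ! k)" using pmf_nonneg[of p "x1 ! k"] by linarith
      qed
      have pos2: "\<forall>k<l. 0 < pmf p (x2 ! k)"
      proof (intro allI impI)
        fix k assume "k < l"
        then have "pmf p (x2 ! k) \<noteq> 0" using P2 by (auto simp: prod_zero_iff)
        then show "0 < pmf p (x2 ! k)" using pmf_nonneg[of p "x2 ! k"] by linarith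
      qed
      have Gp_mono: "Gamma_plus p x2 t \<le> Gamma_plus p x2 t'" if "1 \<le> t" "t \<le> t'" "t' \<le> l" for t t'
        using inv_prod_mono(1)[OF pos2 that(2,3)] Gamma_plus_eq[of t x2 p] Gamma_plus_eq[of t' x2 p] that len
        by simp
      have Gp1: "1 \<le> Gamma_plus p x2 t" if "1 \<le> t" "t \<le> l" for t
        using inv_prod_mono(2)[OF pos2 order.refl that(2)] Gamma_plus_eq[of t x2 p] that len by simp
      have Gm_mono: "Gamma_minus p x1 t \<le> Gamma_minus p x1 t'" if "1 \<le> t" "t \<le> t'" "t' \<le> l" for t t'
        using inv_prod_mono(1)[OF pos1 that(2,3)] Gamma_minus_eq[of t x1 p] Gamma_minus_eq[of t' x1 p] that len
        by simp
      have Gm1: "1 \<le> Gamma_minus p x1 t" if "1 \<le> t" "t \<le> l" for t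
        using inv_prod_mono(2)[OF pos1 order.refl that(2)] Gamma_minus_eq[of t x1 p] that len by simp
      have gp0: "0 \<le> gp"
      proof (cases "tp = 0")
        case True then show ?thesis by (simp add: gp_def Gamma_plus_def)
      next
        case False then have "1 \<le> gp" unfolding gp_def using Gp1[of tp] TP(1) by simp
        then show ?thesis by simp
      qed
      have gm0: "0 \<le> gm"
      proof (cases "tm = 0")
        case True then show ?thesis by (simp add: gm_def Gamma_minus_def)
      next
        case False then have "1 \<le> gm" unfolding gm_def using Gm1[of tm] TM(1) by simp
        then show ?thesis by simp
      qed
      have upper: "obj t \<le> Q * W / real n" if "t \<in> {- (int l - 1) .. int l}" for t
        using that
      proof (cases rule: range_cases)
        case (1 t')
        show ?thesis
        proof (cases "drop (l - t') x1 = take t' x2")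
          case True
          have "t' \<le> tp" using TP(3)[OF 1(2,3) True] .
          then have "Gamma_plus p x2 t' \<le> gp" unfolding gp_def using Gp_mono[of t' tp] 1 TP(1) by simp
          moreover have "1 \<le> tp" using \<open>t' \<le> tp\<close> 1 by simp
          ultimately have "Gamma_plus p x2 t' \<le> W" unfolding W_def by simp
          then show ?thesis using objp[OF 1(2,3)] True 1(1) scale_le[OF Q0 n0] by simp
        next
          case False
          have "0 \<le> Q * W / real n" using Q0 n0 N0 unfolding W_def by simp
          then show ?thesis using objp[OF 1(2,3)] False 1(1) by simp
        qed
      next
        case 2
        have "N \<le> W" unfolding W_def by simp
        then show ?thesis using obj0 2 scale_le[OF Q0 n0, of N W] by (simp add: mult.commute)
      next
        case (3 s)
        show ?thesis
        proof (cases "drop (l - s) x2 = take s x1")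
          case True
          have "s \<le> tm" using TM(3)[OF 3(2) _ True] 3 by simp
          then have "Gamma_minus p x1 s \<le> gm" unfolding gm_def using Gm_mono[of s tm] 3 TM(1) by simp
          moreover have "1 \<le> tm" using \<open>s \<le> tm\<close> 3 by simp
          ultimately have "Gamma_minus p x1 s \<le> W" unfolding W_def by simp
          then show ?thesis using objm[OF 3(2,3)] True 3(1) scale_le[OF Q0 n0] by simp
        next
          case False
          have "0 \<le> Q * W / real n" using Q0 n0 N0 unfolding W_def by simp
          then show ?thesis using objm[OF 3(2,3)] False 3(1) by simp
        qed
      qed
      have obj_tp: "obj (int tp) = Q * gp / real n" if "1 \<le> tp"
        using objp[OF that TP(1)] TP(2) that unfolding gp_def by simp
      have obj_tm: "obj (- int tm) = Q * gm / real n" if "1 \<le> tm"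
        using objm[of tm] TM(1,2) that l1 unfolding gm_def by simp
      have obj_0: "obj 0 = Q * N / real n" using obj0 by (simp add: mult.commute)
      have lower: "\<exists>V. obj r = Q * V / real n \<and> W \<le> V"
      proof (cases "gp \<ge> max gm N")
        case A: True
        show ?thesis
        proof (cases "1 \<le> tp")
          case True
          then show ?thesis using A gm0 gp0 obj_tp unfolding r_eq W_def by (intro exI[of _ gp]) auto
        next
          case False
          then have tp0: "tp = 0" by simp
          have gp1: "gp = 1" unfolding gp_def tp0 by (simp add: Gamma_plus_def)
          have tm0: "tm = 0"
          proof (rule ccontr)
            assume "tm \<noteq> 0"
            then have tm1: "1 \<le> tm" by simp
            have tml: "tm \<le> l" using TM(1) by simp
            have "gm \<le> 1" using A gp1 by simp
            then have "1 / (\<Prod>k<tm. pmf p (x1 ! k)) \<le> 1"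
              unfolding gm_def using Gamma_minus_eq[of tm x1 p] tm1 tml len by simp
            then have "x1 = x2" using degenerate[OF len pos1 pos2 tm1 tml] by blast
            then have "drop (l - l) x1 = take l x2" using len by simp
            then have "l \<le> tp" using TP(3)[OF l1 order.refl] by blast
            then show False using tp0 l1 by simp
          qed
          have "r = 0" unfolding r_eq using A tp0 by simp
          then show ?thesis using obj_0 unfolding W_def using tp0 tm0 N0
            by (intro exI[of _ N]) auto
        qed
      next
        case nA: False
        show ?thesis
        proof (cases "gm \<ge> max gp N")
          case B: True
          show ?thesis
          proof (cases "1 \<le> tm")
            case True
            then show ?thesis using nA B gm0 gp0 obj_tm unfolding r_eq W_def
              by (intro exI[of _ gm]) auto
          next
            case False
            then have tm0: "tm = 0" by simp
            have gm1: "gm = 1" unfolding gm_def tm0 by (simp add: Gamma_minus_def)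
            have "N \<le> 1" using B gm1 by simp
            then have "gp < 1" using nA gm1 by simp
            then have tp0: "tp = 0" using Gp1[of tp] TP(1) unfolding gp_def by force
            have "r = 0" unfolding r_eq using nA B tm0 by simp
            then show ?thesis using obj_0 unfolding W_def using tp0 tm0 N0
              by (intro exI[of _ N]) auto
          qed
        next
          case nB: False
          have "gp < N" "gm < N" using nA nB by auto
          moreover have "r = 0" by (simp only: r_eq if_not_P[OF nA] if_not_P[OF nB])
          ultimately show ?thesis using obj_0 N0 unfolding W_def by (intro exI[of _ N]) auto
        qed
      qed
      then obtain V where V: "obj r = Q * V / real n" "W \<le> V" by blast
      have "Q * W / real n \<le> obj r" unfolding V(1) by (rule scale_le[OF Q0 n0 V(2)])
      with upper show ?thesis by blast
    qed
    show "T_MAP_rule p n l x1 x2 \<in> {- (int l - 1)..int l} \<and>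
          (\<forall>t\<in>{- (int l - 1)..int l}.
              MAP_objective p n l t x1 x2 \<le> MAP_objective p n l (T_MAP_rule p n l x1 x2) x1 x2)"
      using rr key unfolding r_def obj_def by fastforce
  qed
qed


end
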